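(* Let $\alpha\ge0$, $\beta:=\gamma+\alpha>0$, and assume Assumption (A$_f$) and condition (A$_Y$)(b) hold for a continuous $\mathbb{R}_+$-valued process $Y$. Let $U_t:=2\int_0^t f(s,Y_s)\,ds$. Then $$U_t/t^{1+\beta}\xrightarrow{d}2\rho\widetilde{A}\quad\text{as }t\to\infty,$$ where $\widetilde{A}$ is the random variable in (A$_Y$)(b).
   Context: $\mathbb{R}_+=[0,\infty)$. Assumption (A$_f$): $f:\mathbb{R}_+^2\to\mathbb{R}_+$ is continuous and there are $\rho\in(0,\infty)$, $\alpha\in\mathbb{R}_+$, $\gamma\in(-\alpha,\infty)$ such that for every $\varepsilon>0$ there is $r_\varepsilon$ with $\sup_{t+y\ge r_\varepsilon}|f(t,y)(1+t)^{-\gamma}(1+y)^{-\alpha}-\rho|\le\varepsilon$. Let $A_t:=\int_1^t s^\gamma Y_s^\alpha\,ds$, $t\ge1$. Condition (A$_Y$)(b): there is an $\mathbb{R}_+$-valued random variable $\widetilde{A}$ with $A_t/t^{1+\gamma+\alpha}\xrightarrow{d}\widetilde{A}$ as $t\to\infty$. *)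

theory Defs
  imports "HOL-Probability.Probability"
begin

text \<open>Real power with the convention x^0 = 1 (Isabelle's powr has 0 powr 0 = 0).\<close>
definition rpow :: "real \<Rightarrow> real \<Rightarrow> real" where
  "rpow x a = (if a = 0 then 1 else x powr a)"

definition conv_distr_at_top ::
  "'a measure \<Rightarrow> (real \<Rightarrow> 'a \<Rightarrow> real) \<Rightarrow> ('a \<Rightarrow> real) \<Rightarrow> bool" where
  "conv_distr_at_top M X L \<longleftrightarrow>
     (\<forall>g :: real \<Rightarrow> real. continuous_on UNIV g \<longrightarrow> bounded (range g) \<longrightarrow>
        ((\<lambda>t. integral\<^sup>L M (\<lambda>\<omega>. g (X t \<omega>))) \<longlongrightarrow> integral\<^sup>L M (\<lambda>\<omega>. g (L \<omega>))) at_top)"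

end

theory Submission
  imports Defs "HOL-Real_Asymp.Real_Asymp"
begin


lemma integral_split_grid:
  fixes h :: "real \<Rightarrow> real"
  assumes ab: "a \<le> b" and n: "n > 0" and hc: "continuous_on {a..b} h"
  shows "integral {a..b} h = (\<Sum>k<n. integral {a + real k * (b-a)/n .. a + real (Suc k) * (b-a)/n} h)"
proof -
  define x where "x k = a + real k * (b-a)/n" for k
  have xmono: "x i \<le> x j" if "i \<le> j" for i j
    unfolding x_def using that ab n by (intro add_left_mono divide_right_mono mult_right_mono) auto
  have xa: "x 0 = a" and xb: "x n = b" using n by (auto simp: x_def)
  have int: "h integrable_on {a..b}" using hc by (rule integrable_continuous_real)
  have "m \<le> n \<Longrightarrow> integral {a..x m} h = (\<Sum>k<m. integral {x k..x (Suc k)} h)" for m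
  proof (induction m)
    case 0 then show ?case by (simp add: xa)
  next
    case (Suc m)
    have "x (Suc m) \<le> b" using xmono[OF Suc.prems] xb by simp
    then have i2: "h integrable_on {a..x (Suc m)}"
      using integrable_on_subinterval[OF int, of a "x (Suc m)"] by auto
    have "integral {a..x m} h + integral {x m..x (Suc m)} h = integral {a..x (Suc m)} h"
      by (rule Henstock_Kurzweil_Integration.integral_combine[OF _ _ i2]) (use xmono[of 0 m] xmono[of m "Suc m"] xa in auto)
    then show ?case using Suc by simp
  qed
  from this[of n] show ?thesis using xb by (simp add: x_def)
qed

lemma riemann_sum_tendsto:
  fixes h :: "real \<Rightarrow> real"
  assumes ab: "a \<le> b" and hc: "continuous_on {a..b} h"
  shows "(\<lambda>n. \<Sum>k<Suc n. (b-a)/Suc n * h (a + real k * (b-a)/Suc n)) \<longlonglongrightarrow> integral {a..b} h"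
proof (rule LIMSEQ_I)
  fix r :: real assume r: "r > 0"
  define e where "e = r / (2 * (b - a + 1))"
  have e: "e > 0" using r ab by (simp add: e_def)
  have "uniformly_continuous_on {a..b} h" by (rule compact_uniformly_continuous[OF hc]) auto
  then obtain d where d: "d > 0" and dd: "\<And>x y. x \<in> {a..b} \<Longrightarrow> y \<in> {a..b} \<Longrightarrow> dist y x < d \<Longrightarrow> dist (h y) (h x) < e"
    unfolding uniformly_continuous_on_def using e by metis
  obtain N :: nat where N: "real N > (b - a) / d" using reals_Archimedean2 by blast
  show "\<exists>N. \<forall>n\<ge>N. norm ((\<Sum>k<Suc n. (b-a)/Suc n * h (a + real k * (b-a)/Suc n)) - integral {a..b} h) < r"
  proof (intro exI allI impI)
    fix n assume nN: "n \<ge> N"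
    define m where "m = Suc n"
    have m: "m > 0" by (simp add: m_def)
    define x where "x k = a + real k * (b-a)/m" for k
    have xmono: "x i \<le> x j" if "i \<le> j" for i j
      unfolding x_def using that ab m by (intro add_left_mono divide_right_mono mult_right_mono) auto
    have xa: "x 0 = a" and xb: "x m = b" using m by (auto simp: x_def)
    have step: "x (Suc k) - x k = (b-a)/m" for k by (simp add: x_def diff_divide_distrib[symmetric] algebra_simps)
    have stepd: "(b-a)/m < d"
    proof -
      have "(b-a)/d < real m" using N nN by (simp add: m_def)
      then show ?thesis using d m by (simp add: field_simps)
    qed
    have each: "\<bar>integral {x k..x (Suc k)} h - (b-a)/m * h (x k)\<bar> \<le> e * ((b-a)/m)" if k: "k < m" for k
    proof -
      have sub: "{x k..x (Suc k)} \<subseteq> {a..b}" using xmono[of 0 k] xmono[of "Suc k" m] k xa xb by auto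
      have le: "x k \<le> x (Suc k)" by (rule xmono) simp
      have "integral {x k..x (Suc k)} (\<lambda>s. h s - h (x k)) = integral {x k..x (Suc k)} h - (b-a)/m * h (x k)"
        using le step
        by (subst integral_diff) (auto intro!: integrable_continuous_real continuous_on_subset[OF hc sub])
      moreover have "norm (integral {x k..x (Suc k)} (\<lambda>s. h s - h (x k))) \<le> e * (x (Suc k) - x k)"
      proof (rule integral_bound[OF le])
        show "continuous_on {x k..x (Suc k)} (\<lambda>s. h s - h (x k))"
          by (intro continuous_intros continuous_on_subset[OF hc sub])
        fix t assume t: "t \<in> {x k..x (Suc k)}"
        have "dist t (x k) < d" using t step[of k] stepd by (auto simp: dist_real_def)
        then have "dist (h t) (h (x k)) < e" using dd[of "x k" t] t sub le by auto
        then show "norm (h t - h (x k)) \<le> e" by (simp add: dist_real_def)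
      qed
      ultimately show ?thesis using step by simp
    qed
    have "integral {a..b} h = (\<Sum>k<m. integral {x k..x (Suc k)} h)"
      using integral_split_grid[OF ab m hc] by (simp add: x_def)
    then have "\<bar>(\<Sum>k<m. (b-a)/m * h (x k)) - integral {a..b} h\<bar>
        = \<bar>\<Sum>k<m. (integral {x k..x (Suc k)} h - (b-a)/m * h (x k))\<bar>"
      by (simp add: sum_subtractf abs_minus_commute)
    also have "\<dots> \<le> (\<Sum>k<m. \<bar>integral {x k..x (Suc k)} h - (b-a)/m * h (x k)\<bar>)"
      by (rule sum_abs)
    also have "\<dots> \<le> (\<Sum>k<m. e * ((b-a)/m))" by (rule sum_mono) (use each in auto)
    also have "\<dots> = e * (b - a)" using m by simp
    also have "\<dots> < r" using e ab r by (simp add: e_def field_simps) (smt (verit) mult_right_mono)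
    finally show "norm ((\<Sum>k<Suc n. (b-a)/Suc n * h (a + real k * (b-a)/Suc n)) - integral {a..b} h) < r"
      by (simp add: m_def x_def)
  qed
qed

lemma borel_measurable_param_integral:
  fixes h :: "real \<Rightarrow> 'a \<Rightarrow> real"
  assumes ab: "a \<le> b"
    and hm: "\<And>s. s \<in> {a..b} \<Longrightarrow> h s \<in> borel_measurable M"
    and hc: "\<And>\<omega>. \<omega> \<in> space M \<Longrightarrow> continuous_on {a..b} (\<lambda>s. h s \<omega>)"
  shows "(\<lambda>\<omega>. integral {a..b} (\<lambda>s. h s \<omega>)) \<in> borel_measurable M"
proof (rule borel_measurable_LIMSEQ_real)
  fix \<omega> assume "\<omega> \<in> space M"
  from riemann_sum_tendsto[OF ab hc[OF this]]
  show "(\<lambda>n. \<Sum>k<Suc n. (b-a)/Suc n * h (a + real k * (b-a)/Suc n) \<omega>) \<longlonglongrightarrow> integral {a..b} (\<lambda>s. h s \<omega>)" .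
next
  fix n :: nat
  have "h (a + real k * (b-a)/Suc n) \<in> borel_measurable M" if "k < Suc n" for k
  proof (rule hm)
    have "real k * (b-a) \<le> real (Suc n) * (b - a)"
      using that ab by (intro mult_right_mono) auto
    then have "real k * (b-a)/Suc n \<le> (b - a)"
      by (simp add: divide_le_eq mult.commute)
    moreover have "0 \<le> real k * (b-a)/Suc n" using ab by simp
    ultimately show "a + real k * (b-a)/Suc n \<in> {a..b}" by auto
  qed
  then show "(\<lambda>\<omega>. \<Sum>k<Suc n. (b-a)/Suc n * h (a + real k * (b-a)/Suc n) \<omega>) \<in> borel_measurable M"
    by (intro borel_measurable_sum borel_measurable_times borel_measurable_const) auto
qed




lemma key_ineq:
  fixes e1 e2 \<epsilon> \<rho> P Ya w C :: real
  assumes "\<bar>e1\<bar> \<le> \<epsilon>" "\<bar>e2\<bar> \<le> \<epsilon>" "\<epsilon> \<le> 1" "\<rho> > 0" "P > 0" "Ya \<ge> 0" "w \<ge> 0" "w \<le> \<epsilon> * Ya + C"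
  shows "\<bar>P * ((\<rho> + e1) * (1 + e2) * (Ya + w) - \<rho> * Ya)\<bar> \<le> P * (\<epsilon> * (3 * \<rho> + 4) * Ya + 2 * (\<rho> + 1) * C)"
proof -
  have eq: "(\<rho> + e1) * (1 + e2) * (Ya + w) - \<rho> * Ya = (\<rho> * e2 + e1 + e1 * e2) * Ya + ((\<rho> + e1) * (1 + e2)) * w"
    by (simp add: algebra_simps)
  have e12: "\<bar>e1 * e2\<bar> \<le> \<epsilon>"
  proof -
    have "\<epsilon> \<ge> 0" using assms(1) by linarith
    then have "\<bar>e1\<bar> * \<bar>e2\<bar> \<le> \<epsilon> * 1" using mult_mono[of "\<bar>e1\<bar>" \<epsilon> "\<bar>e2\<bar>" 1] assms by simp
    then show ?thesis by (simp add: abs_mult)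
  qed
  have re2: "\<bar>\<rho> * e2\<bar> \<le> \<rho> * \<epsilon>" using assms by (simp add: abs_mult)
  have c1: "\<bar>\<rho> * e2 + e1 + e1 * e2\<bar> \<le> \<epsilon> * (\<rho> + 2)" using e12 re2 assms(1) by (simp add: algebra_simps)
  have t1: "\<bar>(\<rho> * e2 + e1 + e1 * e2) * Ya\<bar> \<le> \<epsilon> * (\<rho> + 2) * Ya"
    using c1 assms(6) by (simp add: abs_mult mult_right_mono)
  have f1: "\<bar>\<rho> + e1\<bar> \<le> \<rho> + 1" "\<bar>1 + e2\<bar> \<le> 2" using assms by auto
  have f3: "\<bar>(\<rho> + e1) * (1 + e2)\<bar> \<le> (\<rho> + 1) * 2"
    unfolding abs_mult using f1 by (intro mult_mono) auto
  have t2a: "\<bar>(\<rho> + e1) * (1 + e2)\<bar> * w \<le> ((\<rho> + 1) * 2) * w" using f3 assms(7) by (rule mult_right_mono)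
  have t2b: "((\<rho> + 1) * 2) * w \<le> ((\<rho> + 1) * 2) * (\<epsilon> * Ya + C)" using assms by (intro mult_left_mono) auto
  have t2: "\<bar>((\<rho> + e1) * (1 + e2)) * w\<bar> \<le> 2 * (\<rho> + 1) * (\<epsilon> * Ya + C)"
  proof -
    have "\<bar>((\<rho> + e1) * (1 + e2)) * w\<bar> = \<bar>(\<rho> + e1) * (1 + e2)\<bar> * w" using assms(7) by (simp only: abs_mult abs_of_nonneg)
    also have "\<dots> \<le> ((\<rho> + 1) * 2) * (\<epsilon> * Ya + C)" using t2a t2b by simp
    finally show ?thesis by (simp add: mult.commute)
  qed
  have "\<bar>(\<rho> + e1) * (1 + e2) * (Ya + w) - \<rho> * Ya\<bar> \<le> \<epsilon> * (3 * \<rho> + 4) * Ya + 2 * (\<rho> + 1) * C"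
    unfolding eq using t1 t2 by (simp add: algebra_simps)
  then show ?thesis using assms(5) by (simp add: abs_mult)
qed

lemma onepy_bound:
  fixes \<alpha> \<epsilon> :: real
  assumes "\<alpha> \<ge> 0" "\<epsilon> > 0"
  shows "\<exists>C\<ge>0. (\<alpha> = 0 \<longrightarrow> C = 0) \<and> (\<forall>y\<ge>0. rpow y \<alpha> \<le> (1 + y) powr \<alpha> \<and> (1 + y) powr \<alpha> \<le> (1 + \<epsilon>) * rpow y \<alpha> + C)"
proof (cases "\<alpha> = 0")
  case True then show ?thesis using assms by (intro exI[of _ 0]) (auto simp: rpow_def)
next
  case False
  then have a: "\<alpha> > 0" using assms by simp
  have "((\<lambda>y. (1 + y) powr \<alpha> / y powr \<alpha>) \<longlongrightarrow> 1) at_top" using a by real_asymp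
  then have "\<forall>\<^sub>F y in at_top. (1 + y) powr \<alpha> / y powr \<alpha> < 1 + \<epsilon>"
    using assms by (intro order_tendstoD) auto
  moreover have "\<forall>\<^sub>F y in at_top. (y::real) > 0" by (rule eventually_gt_at_top)
  ultimately have "\<forall>\<^sub>F y in at_top. y > 0 \<and> (1 + y) powr \<alpha> / y powr \<alpha> < 1 + \<epsilon>" by eventually_elim auto
  then obtain Y0 where Y0: "\<And>y. y \<ge> Y0 \<Longrightarrow> y > 0 \<and> (1 + y) powr \<alpha> / y powr \<alpha> < 1 + \<epsilon>"
    by (auto simp: eventually_at_top_linorder)
  have Y0p: "Y0 > 0" using Y0[of Y0] by simp
  show ?thesis
  proof (intro exI[of _ "(1 + Y0) powr \<alpha>"] conjI allI impI)
    fix y :: real assume y: "y \<ge> 0"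
    show "rpow y \<alpha> \<le> (1 + y) powr \<alpha>" using False y a by (simp add: rpow_def powr_mono2)
    show "(1 + y) powr \<alpha> \<le> (1 + \<epsilon>) * rpow y \<alpha> + (1 + Y0) powr \<alpha>"
    proof (cases "y \<ge> Y0")
      case True
      with Y0 have "y > 0" "(1 + y) powr \<alpha> / y powr \<alpha> < 1 + \<epsilon>" by auto
      then have "(1 + y) powr \<alpha> < (1 + \<epsilon>) * y powr \<alpha>" by (simp add: divide_less_eq)
      moreover have "(1 + Y0) powr \<alpha> \<ge> 0" by simp
      moreover have rp: "rpow y \<alpha> = y powr \<alpha>" using \<open>\<alpha> \<noteq> 0\<close> by (simp add: rpow_def)
      ultimately show ?thesis unfolding rp by linarith
    next
      case False
      have "(1 + y) powr \<alpha> \<le> (1 + Y0) powr \<alpha>" using False y a by (intro powr_mono2) auto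
      moreover have "0 \<le> (1 + \<epsilon>) * rpow y \<alpha>" using assms by (simp add: rpow_def)
      ultimately show ?thesis by linarith
    qed
  qed (insert a, auto)
qed

lemma f_approx:
  fixes f :: "real \<Rightarrow> real \<Rightarrow> real" and \<rho> \<alpha> \<gamma> :: real
  assumes alpha: "\<alpha> \<ge> 0" and rho: "\<rho> > 0"
    and A_f: "\<And>\<epsilon>. \<epsilon> > 0 \<Longrightarrow> \<exists>r. \<forall>t y. t \<ge> 0 \<longrightarrow> y \<ge> 0 \<longrightarrow> t + y \<ge> r \<longrightarrow>
                \<bar>f t y * (1 + t) powr (- \<gamma>) * (1 + y) powr (- \<alpha>) - \<rho>\<bar> \<le> \<epsilon>"
    and eta: "\<eta> > 0"
  shows "\<exists>R\<ge>1. \<exists>C\<ge>0. (\<alpha> = 0 \<longrightarrow> C = 0) \<and> (\<forall>s\<ge>R. \<forall>y\<ge>0.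
           \<bar>f s y - \<rho> * (s powr \<gamma> * rpow y \<alpha>)\<bar> \<le> \<eta> * (s powr \<gamma> * rpow y \<alpha>) + C * s powr \<gamma>)"
proof -
  define \<epsilon> where "\<epsilon> = min 1 (\<eta> / (3 * \<rho> + 4))"
  have ep0: "\<epsilon> > 0" "\<epsilon> \<le> 1" using eta rho
    by (auto simp: \<epsilon>_def min_def field_simps)
  have "\<epsilon> \<le> \<eta> / (3 * \<rho> + 4)" by (simp add: \<epsilon>_def)
  then have "\<epsilon> * (3 * \<rho> + 4) \<le> \<eta>" using rho by (simp add: le_divide_eq)
  note ep = ep0 this
  obtain r where r: "\<And>t y. t \<ge> 0 \<Longrightarrow> y \<ge> 0 \<Longrightarrow> t + y \<ge> r \<Longrightarrow>
                \<bar>f t y * (1 + t) powr (- \<gamma>) * (1 + y) powr (- \<alpha>) - \<rho>\<bar> \<le> \<epsilon>"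
    using A_f[OF ep(1)] by blast
  have "((\<lambda>s. (1 + s) powr \<gamma> / s powr \<gamma>) \<longlongrightarrow> 1) at_top" by real_asymp
  then have "\<forall>\<^sub>F s in at_top. dist ((1 + s) powr \<gamma> / s powr \<gamma>) 1 < \<epsilon>"
    using ep by (simp add: tendsto_iff)
  then obtain R0 where R0: "\<And>s. s \<ge> R0 \<Longrightarrow> \<bar>(1 + s) powr \<gamma> / s powr \<gamma> - 1\<bar> < \<epsilon>"
    by (auto simp: eventually_at_top_linorder dist_real_def)
  obtain C' where C': "C' \<ge> 0" "\<alpha> = 0 \<longrightarrow> C' = 0"
    "\<And>y. y \<ge> 0 \<Longrightarrow> rpow y \<alpha> \<le> (1 + y) powr \<alpha> \<and> (1 + y) powr \<alpha> \<le> (1 + \<epsilon>) * rpow y \<alpha> + C'"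
    using onepy_bound[OF alpha ep(1)] by blast
  define R where "R = max 1 (max R0 r)"
  have R1: "R \<ge> 1" by (simp add: R_def)
  have Cn: "2 * (\<rho> + 1) * C' \<ge> 0" using C' rho by simp
  have Cz: "\<alpha> = 0 \<longrightarrow> 2 * (\<rho> + 1) * C' = 0" using C' by simp
  have main: "\<forall>s\<ge>R. \<forall>y\<ge>0.
           \<bar>f s y - \<rho> * (s powr \<gamma> * rpow y \<alpha>)\<bar> \<le> \<eta> * (s powr \<gamma> * rpow y \<alpha>) + 2 * (\<rho> + 1) * C' * s powr \<gamma>"
  proof (intro allI impI)
    fix s y :: real assume s: "s \<ge> R" and y: "y \<ge> 0"
    have s1: "s \<ge> 1" "s \<ge> R0" "s \<ge> r" using s by (auto simp: R_def)
    define P where "P = s powr \<gamma>"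
    define U where "U = (1 + s) powr \<gamma>"
    define Y1 where "Y1 = (1 + y) powr \<alpha>"
    define Ya where "Ya = rpow y \<alpha>"
    define q where "q = f s y * (1 + s) powr (- \<gamma>) * (1 + y) powr (- \<alpha>)"
    have Pp: "P > 0" using s1 by (simp add: P_def)
    have Up: "U > 0" using s1 by (simp add: U_def)
    have Y1p: "Y1 > 0" using y by (simp add: Y1_def)
    have Yap: "Ya \<ge> 0" by (simp add: Ya_def rpow_def)
    have "q = f s y / U / Y1" by (simp add: q_def U_def Y1_def powr_minus divide_inverse)
    then have fq: "f s y = q * U * Y1"
      using Up Y1p by simp
    have e1: "\<bar>q - \<rho>\<bar> \<le> \<epsilon>" unfolding q_def using r[of s y] s1 y by simp
    have e2: "\<bar>U / P - 1\<bar> \<le> \<epsilon>" using R0[OF s1(2)] by (simp add: U_def P_def)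
    have w: "Y1 - Ya \<ge> 0" "Y1 - Ya \<le> \<epsilon> * Ya + C'" using C'(3)[OF y] by (auto simp: Y1_def Ya_def algebra_simps)
    have ki: "\<bar>P * ((\<rho> + (q - \<rho>)) * (1 + (U/P - 1)) * (Ya + (Y1 - Ya)) - \<rho> * Ya)\<bar> \<le> P * (\<epsilon> * (3 * \<rho> + 4) * Ya + 2 * (\<rho> + 1) * C')"
      by (rule key_ineq[OF e1 e2 ep(2) rho Pp Yap w])
    have lhs: "P * ((\<rho> + (q - \<rho>)) * (1 + (U/P - 1)) * (Ya + (Y1 - Ya)) - \<rho> * Ya) = f s y - \<rho> * (P * Ya)"
    proof -
      have "P * ((\<rho> + (q - \<rho>)) * (1 + (U/P - 1)) * (Ya + (Y1 - Ya)) - \<rho> * Ya) = P * (q * (U/P) * Y1) - \<rho> * (P * Ya)"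
        by (simp add: right_diff_distrib)
      also have "P * (q * (U/P) * Y1) = q * U * Y1" using Pp by simp
      finally show ?thesis using fq by simp
    qed
    have "P * (\<epsilon> * (3 * \<rho> + 4) * Ya + 2 * (\<rho> + 1) * C') \<le> \<eta> * (P * Ya) + 2 * (\<rho> + 1) * C' * P"
    proof -
      have "P * (\<epsilon> * (3 * \<rho> + 4) * Ya) \<le> P * (\<eta> * Ya)" using Pp Yap ep(3) by (intro mult_left_mono mult_right_mono) auto
      then show ?thesis by (simp add: algebra_simps)
    qed
    with ki lhs show "\<bar>f s y - \<rho> * (s powr \<gamma> * rpow y \<alpha>)\<bar> \<le> \<eta> * (s powr \<gamma> * rpow y \<alpha>) + 2 * (\<rho> + 1) * C' * s powr \<gamma>"
      by (simp add: P_def Ya_def)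
  qed
  show ?thesis using R1 Cn Cz main by blast
qed




lemma slutsky_like:
  fixes M :: "'a measure" and X Z :: "real \<Rightarrow> 'a \<Rightarrow> real" and At :: "'a \<Rightarrow> real" and k :: real
  assumes P: "prob_space M"
   and k: "k \<ge> 0"
   and meas: "\<forall>\<^sub>F t in at_top. X t \<in> borel_measurable M \<and> Z t \<in> borel_measurable M \<and> (\<forall>\<omega>\<in>space M. Z t \<omega> \<ge> 0)"
   and At_meas: "At \<in> borel_measurable M"
   and conv: "conv_distr_at_top M Z At"
   and D: "\<And>\<eta>. \<eta> > 0 \<Longrightarrow> \<exists>E. (\<forall>t. E t \<in> borel_measurable M) \<and> (\<forall>\<omega>\<in>space M. ((\<lambda>t. E t \<omega>) \<longlongrightarrow> 0) at_top)
        \<and> (\<forall>\<^sub>F t in at_top. \<forall>\<omega>\<in>space M. \<bar>X t \<omega> - k * Z t \<omega>\<bar> \<le> \<eta> * Z t \<omega> + E t \<omega>)"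
  shows "conv_distr_at_top M X (\<lambda>\<omega>. k * At \<omega>)"
  unfolding conv_distr_at_top_def
proof (intro allI impI)
  interpret prob_space M by (rule P)
  fix g :: "real \<Rightarrow> real"
  assume gc: "continuous_on UNIV g" and gb: "bounded (range g)"
  obtain B0 where B0: "\<And>x. \<bar>g x\<bar> \<le> B0" using gb unfolding bounded_iff by auto
  define B where "B = max B0 1"
  have B: "\<And>x. \<bar>g x\<bar> \<le> B" "B > 0" using B0 by (auto simp: B_def intro: le_max_iff_disj[THEN iffD2])
  have gm: "h \<in> borel_measurable M \<Longrightarrow> (\<lambda>\<omega>. g (h \<omega>)) \<in> borel_measurable M" for h
    by (rule borel_measurable_continuous_on[OF gc])
  have intb: "h \<in> borel_measurable M \<Longrightarrow> (\<And>\<omega>. \<omega> \<in> space M \<Longrightarrow> \<bar>h \<omega>\<bar> \<le> c) \<Longrightarrow> integrable M h" for h :: "'a \<Rightarrow> real" and c :: real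
    by (rule integrable_const_bound[where B=c and f=h]) auto
  have gk_c: "continuous_on UNIV (\<lambda>x. g (k * x))"
    by (rule continuous_on_compose2[OF gc]) (auto intro!: continuous_intros)
  have gk_b: "bounded (range (\<lambda>x. g (k * x)))"
    by (rule bounded_subset[OF gb]) auto
  have lim1: "((\<lambda>t. integral\<^sup>L M (\<lambda>\<omega>. g (k * Z t \<omega>))) \<longlongrightarrow> integral\<^sup>L M (\<lambda>\<omega>. g (k * At \<omega>))) at_top"
    using conv gk_c gk_b unfolding conv_distr_at_top_def by blast
  define \<phi> where "\<phi> L x = min 1 (max 0 (x - L + 1))" for L x :: real
  have \<phi>01: "0 \<le> \<phi> L x" "\<phi> L x \<le> 1" for L x by (auto simp: \<phi>_def)
  have \<phi>c: "continuous_on UNIV (\<phi> L)" for L unfolding \<phi>_def by (intro continuous_intros)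
  have \<phi>b: "bounded (range (\<phi> L))" for L
    unfolding bounded_iff using \<phi>01 by (intro exI[of _ 1]) auto
  have \<phi>m: "h \<in> borel_measurable M \<Longrightarrow> (\<lambda>\<omega>. \<phi> L (h \<omega>)) \<in> borel_measurable M" for h L
    by (rule borel_measurable_continuous_on[OF \<phi>c])
  have lim2: "((\<lambda>t. integral\<^sup>L M (\<lambda>\<omega>. g (X t \<omega>)) - integral\<^sup>L M (\<lambda>\<omega>. g (k * Z t \<omega>))) \<longlongrightarrow> 0) at_top"
  proof (rule tendstoI)
    fix e :: real assume e: "e > 0"
    define e8 where "e8 = e / (8 * B)"
    have e8: "e8 > 0" "2 * B * e8 = e / 4" using e B(2) by (auto simp: e8_def)
    have "((\<lambda>L. integral\<^sup>L M (\<lambda>\<omega>. \<phi> L (At \<omega>))) \<longlongrightarrow> integral\<^sup>L M (\<lambda>\<omega>. 0)) at_top"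
    proof (rule integral_dominated_convergence_at_top[where w="\<lambda>_. 1"])
      show "(\<lambda>\<omega>. 0::real) \<in> borel_measurable M" by simp
      show "(\<lambda>\<omega>. \<phi> L (At \<omega>)) \<in> borel_measurable M" for L by (rule \<phi>m[OF At_meas])
      show "integrable M (\<lambda>_. 1::real)" by simp
      show "AE \<omega> in M. ((\<lambda>L. \<phi> L (At \<omega>)) \<longlongrightarrow> 0) at_top"
      proof (rule AE_I2)
        fix \<omega>
        have "\<forall>\<^sub>F L in at_top. L \<ge> At \<omega> + 1" by (rule eventually_ge_at_top)
        then have "\<forall>\<^sub>F L in at_top. \<phi> L (At \<omega>) = 0" by eventually_elim (auto simp: \<phi>_def)
        then show "((\<lambda>L. \<phi> L (At \<omega>)) \<longlongrightarrow> 0) at_top" by (rule tendsto_eventually)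
      qed
      show "\<forall>\<^sub>F L in at_top. AE \<omega> in M. norm (\<phi> L (At \<omega>)) \<le> 1" using \<phi>01 by auto
    qed
    then have "\<forall>\<^sub>F L in at_top. integral\<^sup>L M (\<lambda>\<omega>. \<phi> L (At \<omega>)) < e8"
      using e8 by (intro order_tendstoD(2)) auto
    moreover have "\<forall>\<^sub>F L in at_top. (L::real) \<ge> 0" by (rule eventually_ge_at_top)
    ultimately have "\<forall>\<^sub>F L in at_top. L \<ge> 0 \<and> integral\<^sup>L M (\<lambda>\<omega>. \<phi> L (At \<omega>)) < e8"
      by eventually_elim auto
    then obtain L where L: "L \<ge> 0" "integral\<^sup>L M (\<lambda>\<omega>. \<phi> L (At \<omega>)) < e8"
      using eventually_happens'[OF trivial_limit_at_top_linorder] by blast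
    have "((\<lambda>t. integral\<^sup>L M (\<lambda>\<omega>. \<phi> L (Z t \<omega>))) \<longlongrightarrow> integral\<^sup>L M (\<lambda>\<omega>. \<phi> L (At \<omega>))) at_top"
      using conv \<phi>c \<phi>b unfolding conv_distr_at_top_def by blast
    then have ev2: "\<forall>\<^sub>F t in at_top. integral\<^sup>L M (\<lambda>\<omega>. \<phi> L (Z t \<omega>)) < e8"
      using L(2) by (intro order_tendstoD(2))
    have "uniformly_continuous_on (cball 0 (k * L + 1)) g"
      by (rule compact_uniformly_continuous[OF continuous_on_subset[OF gc]]) auto
    then obtain d where d: "d > 0" and dd: "\<And>x x'. x \<in> cball 0 (k * L + 1) \<Longrightarrow> x' \<in> cball 0 (k * L + 1) \<Longrightarrow>
        dist x' x < d \<Longrightarrow> dist (g x') (g x) < e / 4"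
      unfolding uniformly_continuous_on_def using e by (metis zero_less_divide_iff zero_less_numeral)
    define \<delta> where "\<delta> = min d 1"
    have \<delta>: "\<delta> > 0" "\<delta> \<le> d" "\<delta> \<le> 1" using d by (auto simp: \<delta>_def)
    define \<eta> where "\<eta> = \<delta> / (4 * (L + 1))"
    have \<eta>: "\<eta> > 0" using \<delta> L by (simp add: \<eta>_def)
    have \<eta>L: "\<eta> * L < \<delta> / 4" using \<delta> L by (simp add: \<eta>_def field_simps)
    obtain E where Em: "\<And>t. E t \<in> borel_measurable M"
      and Elim: "\<And>\<omega>. \<omega> \<in> space M \<Longrightarrow> ((\<lambda>t. E t \<omega>) \<longlongrightarrow> 0) at_top"
      and Eb: "\<forall>\<^sub>F t in at_top. \<forall>\<omega>\<in>space M. \<bar>X t \<omega> - k * Z t \<omega>\<bar> \<le> \<eta> * Z t \<omega> + E t \<omega>"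
      using D[OF \<eta>] by blast
    define sE where "sE t \<omega> = min 1 (\<bar>E t \<omega>\<bar> * (4 / \<delta>))" for t \<omega>
    have sE01: "0 \<le> sE t \<omega>" "sE t \<omega> \<le> 1" for t \<omega> using \<delta> by (auto simp: sE_def)
    have sEm: "sE t \<in> borel_measurable M" for t unfolding sE_def using Em[of t] by measurable
    have "((\<lambda>t. integral\<^sup>L M (sE t)) \<longlongrightarrow> integral\<^sup>L M (\<lambda>\<omega>. 0)) at_top"
    proof (rule integral_dominated_convergence_at_top[where w="\<lambda>_. 1"])
      show "(\<lambda>\<omega>. 0::real) \<in> borel_measurable M" by simp
      show "sE t \<in> borel_measurable M" for t by (rule sEm)
      show "integrable M (\<lambda>_. 1::real)" by simp
      show "AE \<omega> in M. ((\<lambda>t. sE t \<omega>) \<longlongrightarrow> 0) at_top"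
      proof (rule AE_I2)
        fix \<omega> assume "\<omega> \<in> space M"
        then have "((\<lambda>t. min 1 (\<bar>E t \<omega>\<bar> * (4 / \<delta>))) \<longlongrightarrow> min 1 (\<bar>0\<bar> * (4 / \<delta>))) at_top"
          by (intro tendsto_intros Elim)
        then show "((\<lambda>t. sE t \<omega>) \<longlongrightarrow> 0) at_top" by (simp add: sE_def)
      qed
      show "\<forall>\<^sub>F t in at_top. AE \<omega> in M. norm (sE t \<omega>) \<le> 1" using sE01 by auto
    qed
    then have ev4: "\<forall>\<^sub>F t in at_top. integral\<^sup>L M (sE t) < e8"
      using e8 by (intro order_tendstoD(2)) auto
    from meas Eb ev2 ev4
    show "\<forall>\<^sub>F t in at_top. dist (integral\<^sup>L M (\<lambda>\<omega>. g (X t \<omega>)) - integral\<^sup>L M (\<lambda>\<omega>. g (k * Z t \<omega>))) 0 < e"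
    proof eventually_elim
      case (elim t)
      have Xm: "X t \<in> borel_measurable M" and Zm: "Z t \<in> borel_measurable M"
        and Z0: "\<And>\<omega>. \<omega> \<in> space M \<Longrightarrow> Z t \<omega> \<ge> 0" using elim(1) by auto
      have bnd: "\<bar>g (X t \<omega>) - g (k * Z t \<omega>)\<bar> \<le> e / 4 + 2 * B * \<phi> L (Z t \<omega>) + 2 * B * sE t \<omega>"
        if \<omega>: "\<omega> \<in> space M" for \<omega>
      proof -
        define z where "z = Z t \<omega>"
        define x where "x = X t \<omega>"
        have z0: "z \<ge> 0" using Z0[OF \<omega>] by (simp add: z_def)
        have xz: "\<bar>x - k * z\<bar> \<le> \<eta> * z + E t \<omega>" using elim(2) \<omega> by (simp add: x_def z_def)
        have all: "\<bar>g x - g (k * z)\<bar> \<le> 2 * B" using B(1)[of x] B(1)[of "k*z"] by linarith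
        have pos: "0 \<le> 2 * B * \<phi> L z" "0 \<le> 2 * B * sE t \<omega>" using B(2) \<phi>01[of L z] sE01[of t \<omega>] by simp_all
        have "\<bar>g x - g (k * z)\<bar> \<le> e / 4 + 2 * B * \<phi> L z + 2 * B * sE t \<omega>"
        proof (cases "z > L")
          case True
          then have "\<phi> L z = 1" by (simp add: \<phi>_def)
          then show ?thesis using all pos e by simp
        next
          case zL: False
          show ?thesis
          proof (cases "\<bar>E t \<omega>\<bar> * (4 / \<delta>) \<ge> 1")
            case True
            then have "sE t \<omega> = 1" by (simp add: sE_def)
            then show ?thesis using all pos e by simp
          next
            case False
            then have Esm: "\<bar>E t \<omega>\<bar> < \<delta> / 4" using \<delta> by (simp add: field_simps)
            have "\<eta> * z \<le> \<eta> * L" using zL \<eta> by (intro mult_left_mono) auto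
            then have close: "\<bar>x - k * z\<bar> < \<delta> / 2" using xz Esm \<eta>L by linarith
            have kz: "k * z \<le> k * L" using zL k by (intro mult_left_mono) auto
            have kz0: "k * z \<ge> 0" using k z0 by simp
            have m1: "k * z \<in> cball 0 (k * L + 1)" using kz kz0 by (simp add: dist_real_def)
            have tri: "\<bar>x\<bar> \<le> \<bar>k * z\<bar> + \<bar>x - k * z\<bar>" using abs_triangle_ineq[of "k*z" "x - k*z"] by simp
            have m2: "x \<in> cball 0 (k * L + 1)" using kz kz0 close \<delta> tri by (simp add: dist_real_def)
            have "dist x (k * z) < d" using close \<delta> by (simp add: dist_real_def)
            then have "dist (g x) (g (k * z)) < e / 4" by (rule dd[OF m1 m2])
            then show ?thesis using pos by (simp add: dist_real_def)
          qed
        qed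
        then show ?thesis by (simp add: x_def z_def)
      qed
      have i1: "integrable M (\<lambda>\<omega>. g (X t \<omega>))" by (rule intb[OF gm[OF Xm] B(1)])
      have i2: "integrable M (\<lambda>\<omega>. g (k * Z t \<omega>))"
        by (rule intb[OF gm B(1)]) (use Zm in measurable)
      have i3: "integrable M (\<lambda>\<omega>. \<phi> L (Z t \<omega>))" using \<phi>m[OF Zm] \<phi>01 by (intro integrable_const_bound[where B=1]) auto
      have i4: "integrable M (sE t)" using sEm sE01 by (intro integrable_const_bound[where B=1]) auto
      have "\<bar>integral\<^sup>L M (\<lambda>\<omega>. g (X t \<omega>)) - integral\<^sup>L M (\<lambda>\<omega>. g (k * Z t \<omega>))\<bar>
          = \<bar>integral\<^sup>L M (\<lambda>\<omega>. g (X t \<omega>) - g (k * Z t \<omega>))\<bar>" using i1 i2 by simp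
      also have "\<dots> \<le> integral\<^sup>L M (\<lambda>\<omega>. \<bar>g (X t \<omega>) - g (k * Z t \<omega>)\<bar>)" by (rule integral_abs_bound)
      also have "\<dots> \<le> integral\<^sup>L M (\<lambda>\<omega>. e / 4 + 2 * B * \<phi> L (Z t \<omega>) + 2 * B * sE t \<omega>)"
        by (rule integral_mono) (use i1 i2 i3 i4 bnd in auto)
      also have "\<dots> = e / 4 + 2 * B * integral\<^sup>L M (\<lambda>\<omega>. \<phi> L (Z t \<omega>)) + 2 * B * integral\<^sup>L M (sE t)"
        using i3 i4 by (simp add: prob_space)
      also have "\<dots> < e / 4 + 2 * B * e8 + 2 * B * e8"
      proof -
        have "2 * B * integral\<^sup>L M (\<lambda>\<omega>. \<phi> L (Z t \<omega>)) < 2 * B * e8"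
          using elim(3) B(2) by (intro mult_strict_left_mono) auto
        moreover have "2 * B * integral\<^sup>L M (sE t) < 2 * B * e8"
          using elim(4) B(2) by (intro mult_strict_left_mono) auto
        ultimately show ?thesis by linarith
      qed
      also have "\<dots> < e" using e8 e by simp
      finally show ?case by (simp add: dist_real_def)
    qed
  qed
  have "((\<lambda>t. (integral\<^sup>L M (\<lambda>\<omega>. g (X t \<omega>)) - integral\<^sup>L M (\<lambda>\<omega>. g (k * Z t \<omega>))) + integral\<^sup>L M (\<lambda>\<omega>. g (k * Z t \<omega>)))
      \<longlongrightarrow> 0 + integral\<^sup>L M (\<lambda>\<omega>. g (k * At \<omega>))) at_top"
    by (rule tendsto_add[OF lim2 lim1])
  then show "((\<lambda>t. integral\<^sup>L M (\<lambda>\<omega>. g (X t \<omega>))) \<longlongrightarrow> integral\<^sup>L M (\<lambda>\<omega>. g (k * At \<omega>))) at_top"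
    by simp
qed




lemma pathwise_bound:
  fixes u h :: "real \<Rightarrow> real" and R t \<rho> \<eta> C \<gamma> :: real
  assumes R1: "1 \<le> R" and Rt: "R \<le> t"
    and uc: "continuous_on {0..t} u" and hc: "continuous_on {1..t} h"
    and h0: "\<And>s. s \<in> {1..t} \<Longrightarrow> h s \<ge> 0"
    and C: "C \<ge> 0" and eta: "\<eta> \<ge> 0"
    and bnd: "\<And>s. s \<in> {R..t} \<Longrightarrow> \<bar>u s - \<rho> * h s\<bar> \<le> \<eta> * h s + C * s powr \<gamma>"
  shows "\<bar>integral {0..t} u - \<rho> * integral {1..t} h\<bar>
     \<le> \<bar>integral {0..R} u - \<rho> * integral {1..R} h\<bar> + \<eta> * integral {1..t} h + C * ((t powr \<gamma> + 1) * t)"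
proof -
  have iu: "u integrable_on {0..t}" by (rule integrable_continuous_real[OF uc])
  have ih: "h integrable_on {1..t}" by (rule integrable_continuous_real[OF hc])
  have sub1: "{R..t} \<subseteq> {0..t}" "{R..t} \<subseteq> {1..t}" using R1 by auto
  have iuR: "u integrable_on {R..t}" using integrable_on_subinterval[OF iu sub1(1)] .
  have ihR: "h integrable_on {R..t}" using integrable_on_subinterval[OF ih sub1(2)] .
  have ih1R: "h integrable_on {1..R}" using integrable_on_subinterval[OF ih, of 1 R] Rt by auto
  have pc: "continuous_on {R..t} (\<lambda>s. s powr \<gamma>)" using R1
    by (intro continuous_on_powr' continuous_intros) auto
  have ip: "(\<lambda>s. s powr \<gamma>) integrable_on {R..t}" by (rule integrable_continuous_real[OF pc])
  have Su: "integral {0..R} u + integral {R..t} u = integral {0..t} u"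
    using R1 Rt by (intro Henstock_Kurzweil_Integration.integral_combine iu) auto
  have Sh: "integral {1..R} h + integral {R..t} h = integral {1..t} h"
    using R1 Rt by (intro Henstock_Kurzweil_Integration.integral_combine ih) auto
  have h1R: "integral {1..R} h \<ge> 0" using ih1R h0 Rt by (intro integral_nonneg) auto
  have dif: "integral {R..t} u - \<rho> * integral {R..t} h = integral {R..t} (\<lambda>s. u s - \<rho> * h s)"
  proof -
    have "(\<lambda>s. \<rho> * h s) integrable_on {R..t}" using ihR by (rule integrable_on_mult_right)
    then have "integral {R..t} (\<lambda>s. u s - \<rho> * h s) = integral {R..t} u - integral {R..t} (\<lambda>s. \<rho> * h s)"
      by (rule Henstock_Kurzweil_Integration.integral_diff[OF iuR])
    then show ?thesis by simp
  qed
  have i2: "(\<lambda>s. \<eta> * h s + C * s powr \<gamma>) integrable_on {R..t}"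
    using ihR ip by (intro integrable_add integrable_on_mult_right) auto
  have "\<bar>integral {R..t} (\<lambda>s. u s - \<rho> * h s)\<bar> \<le> integral {R..t} (\<lambda>s. \<eta> * h s + C * s powr \<gamma>)"
  proof -
    have "(\<lambda>s. u s - \<rho> * h s) integrable_on {R..t}"
      using iuR ihR by (intro integrable_diff integrable_on_mult_right)
    then show ?thesis using integral_norm_bound_integral[OF _ i2, of "\<lambda>s. u s - \<rho> * h s"] bnd by auto
  qed
  also have "\<dots> = \<eta> * integral {R..t} h + C * integral {R..t} (\<lambda>s. s powr \<gamma>)"
    using ihR ip by (simp add: integral_add integrable_on_mult_right)
  also have "integral {R..t} (\<lambda>s. s powr \<gamma>) \<le> (t powr \<gamma> + 1) * (t - R)"
  proof -
    have "norm (integral {R..t} (\<lambda>s. s powr \<gamma>)) \<le> (t powr \<gamma> + 1) * (t - R)"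
    proof (rule integral_bound[OF Rt pc])
      fix s assume s: "s \<in> {R..t}"
      then have s1: "s \<ge> 1" using R1 by auto
      show "norm (s powr \<gamma>) \<le> t powr \<gamma> + 1"
      proof (cases "\<gamma> \<ge> 0")
        case True
        then have "s powr \<gamma> \<le> t powr \<gamma>" using s s1 by (intro powr_mono2) auto
        then show ?thesis by simp
      next
        case False
        then have "s powr \<gamma> \<le> s powr 0" using s1 by (intro powr_mono) auto
        moreover have "t powr \<gamma> \<ge> 0" by simp
        moreover have "norm (s powr \<gamma>) = s powr \<gamma>" by simp
        moreover have "s powr 0 = 1" using s1 by simp
        ultimately show ?thesis using s1 by linarith
      qed
    qed
    then show ?thesis by simp
  qed
  also have "(t powr \<gamma> + 1) * (t - R) \<le> (t powr \<gamma> + 1) * t"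
    using R1 by (intro mult_left_mono) auto
  finally have "\<bar>integral {R..t} (\<lambda>s. u s - \<rho> * h s)\<bar> \<le> \<eta> * integral {R..t} h + C * ((t powr \<gamma> + 1) * t)"
    using C by (simp add: mult_left_mono)
  moreover have "\<eta> * integral {R..t} h \<le> \<eta> * integral {1..t} h"
    using eta Sh h1R by (intro mult_left_mono) auto
  moreover have "integral {0..t} u - \<rho> * integral {1..t} h
      = (integral {0..R} u - \<rho> * integral {1..R} h) + integral {R..t} (\<lambda>s. u s - \<rho> * h s)"
  proof -
    have "\<rho> * integral {1..t} h = \<rho> * integral {1..R} h + \<rho> * integral {R..t} h"
      using Sh by (metis distrib_left)
    then show ?thesis using Su dif by linarith
  qed
  ultimately show ?thesis by linarith
qed




theorem lemma3p3:
  fixes M :: "'a measure" and Y :: "real \<Rightarrow> 'a \<Rightarrow> real"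
    and f :: "real \<Rightarrow> real \<Rightarrow> real" and \<rho> \<alpha> \<gamma> :: real and At :: "'a \<Rightarrow> real"
  assumes "prob_space M"
    and Y_meas: "\<And>t. t \<ge> 0 \<Longrightarrow> Y t \<in> borel_measurable M"
    and Y_cont: "\<And>\<omega>. \<omega> \<in> space M \<Longrightarrow> continuous_on {0..} (\<lambda>t. Y t \<omega>)"
    and Y_nonneg: "\<And>t \<omega>. t \<ge> 0 \<Longrightarrow> \<omega> \<in> space M \<Longrightarrow> Y t \<omega> \<ge> 0"
    and alpha: "\<alpha> \<ge> 0" and beta: "\<gamma> + \<alpha> > 0"
    and f_cont: "continuous_on ({0..} \<times> {0..}) (\<lambda>(t, y). f t y)"
    and f_nonneg: "\<And>t y. t \<ge> 0 \<Longrightarrow> y \<ge> 0 \<Longrightarrow> f t y \<ge> 0"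
    and rho: "\<rho> > 0"
    and A_f: "\<And>\<epsilon>. \<epsilon> > 0 \<Longrightarrow> \<exists>r. \<forall>t y. t \<ge> 0 \<longrightarrow> y \<ge> 0 \<longrightarrow> t + y \<ge> r \<longrightarrow>
                \<bar>f t y * (1 + t) powr (- \<gamma>) * (1 + y) powr (- \<alpha>) - \<rho>\<bar> \<le> \<epsilon>"
    and At_meas: "At \<in> borel_measurable M"
    and At_nonneg: "\<And>\<omega>. \<omega> \<in> space M \<Longrightarrow> At \<omega> \<ge> 0"
    and A_Y: "conv_distr_at_top M
                (\<lambda>t \<omega>. integral {1..t} (\<lambda>s. s powr \<gamma> * rpow (Y s \<omega>) \<alpha>) / t powr (1 + \<gamma> + \<alpha>)) At"
  shows "conv_distr_at_top M
           (\<lambda>t \<omega>. 2 * integral {0..t} (\<lambda>s. f s (Y s \<omega>)) / t powr (1 + (\<gamma> + \<alpha>)))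
           (\<lambda>\<omega>. 2 * \<rho> * At \<omega>)"
proof -
  define p where "p = 1 + (\<gamma> + \<alpha>)"
  have p1: "1 + \<gamma> + \<alpha> = p" by (simp add: p_def)
  have pp: "p > 1" using beta by (simp add: p_def)
  define F where "F t \<omega> = integral {0..t} (\<lambda>s. f s (Y s \<omega>))" for t \<omega>
  define H where "H s \<omega> = s powr \<gamma> * rpow (Y s \<omega>) \<alpha>" for s \<omega>
  define A where "A t \<omega> = integral {1..t} (\<lambda>s. H s \<omega>)" for t \<omega>
  have fc: "continuous_on {0..} (\<lambda>s. f s (Y s \<omega>))" if \<omega>: "\<omega> \<in> space M" for \<omega>
  proof -
    have "continuous_on {0..} (\<lambda>s. (\<lambda>(t, y). f t y) (s, Y s \<omega>))"
    proof (rule continuous_on_compose2[OF f_cont])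
      show "continuous_on {0..} (\<lambda>s. (s, Y s \<omega>))" by (intro continuous_on_Pair continuous_on_id Y_cont[OF \<omega>])
      show "(\<lambda>s. (s, Y s \<omega>)) ` {0..} \<subseteq> {0..} \<times> {0..}" using Y_nonneg[OF _ \<omega>] by auto
    qed
    then show ?thesis by simp
  qed
  have Hnn: "H s \<omega> \<ge> 0" for s \<omega> by (simp add: H_def rpow_def)
  have Hc: "continuous_on {1..} (\<lambda>s. H s \<omega>)" if \<omega>: "\<omega> \<in> space M" for \<omega>
  proof -
    have Yc1: "continuous_on {1..} (\<lambda>s. Y s \<omega>)" by (rule continuous_on_subset[OF Y_cont[OF \<omega>]]) auto
    have rc: "continuous_on {1..} (\<lambda>s. rpow (Y s \<omega>) \<alpha>)"
    proof (cases "\<alpha> = 0")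
      case True then show ?thesis by (simp add: rpow_def)
    next
      case False
      then have "continuous_on {1..} (\<lambda>s. Y s \<omega> powr \<alpha>)"
        using alpha Y_nonneg[OF _ \<omega>] by (intro continuous_on_powr' Yc1 continuous_intros) auto
      then show ?thesis using False by (simp add: rpow_def)
    qed
    have "continuous_on {1..} (\<lambda>s. s powr \<gamma>)" by (intro continuous_on_powr' continuous_intros) auto
    then show ?thesis unfolding H_def using rc by (rule continuous_on_mult)
  qed
  have fm: "(\<lambda>\<omega>. f s (Y s \<omega>)) \<in> borel_measurable M" if s: "s \<ge> 0" for s
  proof -
    have "continuous_on UNIV (\<lambda>y. (\<lambda>(t, y). f t y) (s, max 0 y))"
      by (rule continuous_on_compose2[OF f_cont]) (use s in \<open>auto intro!: continuous_intros\<close>)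
    then have "(\<lambda>\<omega>. f s (max 0 (Y s \<omega>))) \<in> borel_measurable M"
      using borel_measurable_continuous_on[OF _ Y_meas[OF s]] by simp
    moreover have "\<And>\<omega>. \<omega> \<in> space M \<Longrightarrow> f s (max 0 (Y s \<omega>)) = f s (Y s \<omega>)"
      using Y_nonneg[OF s] by (simp add: max_def)
    ultimately show ?thesis using measurable_cong by (smt (verit))
  qed
  have Hm: "(\<lambda>\<omega>. H s \<omega>) \<in> borel_measurable M" if s: "s \<ge> 0" for s
    unfolding H_def rpow_def using Y_meas[OF s] by measurable
  have Fm: "F t \<in> borel_measurable M" if t: "t \<ge> 0" for t
    unfolding F_def using t
    by (intro borel_measurable_param_integral fm) (auto intro: continuous_on_subset[OF fc])
  have Am: "A t \<in> borel_measurable M" if t: "t \<ge> 1" for t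
    unfolding A_def using t
    by (intro borel_measurable_param_integral Hm) (auto intro: continuous_on_subset[OF Hc])
  have A0: "A t \<omega> \<ge> 0" if "t \<ge> 1" "\<omega> \<in> space M" for t \<omega>
    unfolding A_def using that Hnn
    by (intro integral_nonneg integrable_continuous_real continuous_on_subset[OF Hc]) auto
  have "conv_distr_at_top M (\<lambda>t \<omega>. 2 * F t \<omega> / t powr p) (\<lambda>\<omega>. (2 * \<rho>) * At \<omega>)"
  proof (rule slutsky_like[where Z="\<lambda>t \<omega>. A t \<omega> / t powr p"])
    show "prob_space M" by fact
    show "2 * \<rho> \<ge> 0" using rho by simp
    show "At \<in> borel_measurable M" by fact
    show "conv_distr_at_top M (\<lambda>t \<omega>. A t \<omega> / t powr p) At"
      using A_Y by (simp add: A_def H_def p1)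
    show "\<forall>\<^sub>F t in at_top. (\<lambda>\<omega>. 2 * F t \<omega> / t powr p) \<in> borel_measurable M \<and>
        (\<lambda>\<omega>. A t \<omega> / t powr p) \<in> borel_measurable M \<and> (\<forall>\<omega>\<in>space M. A t \<omega> / t powr p \<ge> 0)"
      using eventually_ge_at_top[of "1::real"]
    proof eventually_elim
      case (elim t)
      then show ?case using Fm[of t] Am[of t] A0[of t] by auto
    qed
    fix \<eta> :: real assume \<eta>: "\<eta> > 0"
    obtain R C where R: "R \<ge> 1" and C: "C \<ge> 0" "\<alpha> = 0 \<longrightarrow> C = 0"
      and RC: "\<And>s y. s \<ge> R \<Longrightarrow> y \<ge> 0 \<Longrightarrow>
           \<bar>f s y - \<rho> * (s powr \<gamma> * rpow y \<alpha>)\<bar> \<le> (\<eta>/2) * (s powr \<gamma> * rpow y \<alpha>) + C * s powr \<gamma>"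
      using f_approx[OF alpha rho A_f, of "\<eta>/2"] \<eta> by auto
    define K where "K \<omega> = \<bar>F R \<omega> - \<rho> * A R \<omega>\<bar>" for \<omega>
    have Km: "K \<in> borel_measurable M" unfolding K_def using Fm[of R] Am[of R] R
      by (intro borel_measurable_abs borel_measurable_diff borel_measurable_times borel_measurable_const) auto
    define E where "E t \<omega> = 2 * K \<omega> * t powr (- p) + 2 * C * (t powr (- \<alpha>) + t powr (- (\<gamma> + \<alpha>)))" for t \<omega>
    show "\<exists>E. (\<forall>t. E t \<in> borel_measurable M) \<and> (\<forall>\<omega>\<in>space M. ((\<lambda>t. E t \<omega>) \<longlongrightarrow> 0) at_top) \<and>
        (\<forall>\<^sub>F t in at_top. \<forall>\<omega>\<in>space M. \<bar>2 * F t \<omega> / t powr p - 2 * \<rho> * (A t \<omega> / t powr p)\<bar>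
            \<le> \<eta> * (A t \<omega> / t powr p) + E t \<omega>)"
    proof (intro exI[of _ E] conjI ballI allI)
      fix t show "E t \<in> borel_measurable M" unfolding E_def using Km by measurable
    next
      fix \<omega> assume \<omega>: "\<omega> \<in> space M"
      have l1: "((\<lambda>t. t powr (- p)) \<longlongrightarrow> 0) at_top" using pp by (intro tendsto_neg_powr filterlim_ident) auto
      have l2: "((\<lambda>t. 2 * C * (t powr (- \<alpha>) + t powr (- (\<gamma> + \<alpha>)))) \<longlongrightarrow> 0) at_top"
      proof (cases "C = 0")
        case True then show ?thesis by simp
      next
        case False
        then have a: "\<alpha> > 0" using C alpha by auto
        have "((\<lambda>t. 2 * C * (t powr (- \<alpha>) + t powr (- (\<gamma> + \<alpha>)))) \<longlongrightarrow> 2 * C * (0 + 0)) at_top"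
          using a beta by (intro tendsto_intros tendsto_neg_powr filterlim_ident) auto
        then show ?thesis by simp
      qed
      have "((\<lambda>t. 2 * K \<omega> * t powr (- p) + 2 * C * (t powr (- \<alpha>) + t powr (- (\<gamma> + \<alpha>)))) \<longlongrightarrow> 2 * K \<omega> * 0 + 0) at_top"
        by (intro tendsto_intros l1 l2)
      then show "((\<lambda>t. E t \<omega>) \<longlongrightarrow> 0) at_top" by (simp add: E_def)
    next
      show "\<forall>\<^sub>F t in at_top. \<forall>\<omega>\<in>space M. \<bar>2 * F t \<omega> / t powr p - 2 * \<rho> * (A t \<omega> / t powr p)\<bar>
            \<le> \<eta> * (A t \<omega> / t powr p) + E t \<omega>"
        using eventually_ge_at_top[of R]
      proof eventually_elim
        case (elim t)
        show ?case
        proof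
          fix \<omega> assume \<omega>: "\<omega> \<in> space M"
          have t1: "t \<ge> 1" using elim R by simp
          have tp: "t powr p > 0" using t1 by simp
          have pb: "\<bar>F t \<omega> - \<rho> * A t \<omega>\<bar> \<le> K \<omega> + (\<eta>/2) * A t \<omega> + C * ((t powr \<gamma> + 1) * t)"
            unfolding F_def A_def K_def
          proof (rule pathwise_bound[OF R elim])
            show "continuous_on {0..t} (\<lambda>s. f s (Y s \<omega>))" by (rule continuous_on_subset[OF fc[OF \<omega>]]) auto
            show "continuous_on {1..t} (\<lambda>s. H s \<omega>)" by (rule continuous_on_subset[OF Hc[OF \<omega>]]) auto
            show "\<And>s. s \<in> {1..t} \<Longrightarrow> H s \<omega> \<ge> 0" by (rule Hnn)
            show "C \<ge> 0" by fact
            show "\<eta>/2 \<ge> 0" using \<eta> by simp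
            fix s assume s: "s \<in> {R..t}"
            then have "s \<ge> 0" using R by auto
            then show "\<bar>f s (Y s \<omega>) - \<rho> * H s \<omega>\<bar> \<le> \<eta>/2 * H s \<omega> + C * s powr \<gamma>"
              using RC[of s "Y s \<omega>"] s Y_nonneg[OF _ \<omega>] by (auto simp: H_def)
          qed
          have eq1: "\<bar>2 * F t \<omega> / t powr p - 2 * \<rho> * (A t \<omega> / t powr p)\<bar> = 2 * \<bar>F t \<omega> - \<rho> * A t \<omega>\<bar> / t powr p"
          proof -
            have "2 * F t \<omega> / t powr p - 2 * \<rho> * (A t \<omega> / t powr p) = (2 * (F t \<omega> - \<rho> * A t \<omega>)) / t powr p"
              by (simp add: diff_divide_distrib algebra_simps)
            moreover have "\<bar>(2 * (F t \<omega> - \<rho> * A t \<omega>)) / t powr p\<bar> = 2 * \<bar>F t \<omega> - \<rho> * A t \<omega>\<bar> / t powr p"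
              using tp by (simp only: abs_divide abs_mult)
            ultimately show ?thesis by simp
          qed
          have eq2: "(t powr \<gamma> + 1) * t / t powr p = t powr (- \<alpha>) + t powr (- (\<gamma> + \<alpha>))"
          proof -
            have "(t powr \<gamma> + 1) * t = t powr (\<gamma> + 1) + t powr 1" using t1 by (simp add: powr_add algebra_simps)
            then have "(t powr \<gamma> + 1) * t / t powr p = t powr (\<gamma> + 1) / t powr p + t powr 1 / t powr p"
              by (simp add: add_divide_distrib)
            also have "\<dots> = t powr (\<gamma> + 1 - p) + t powr (1 - p)" by (simp add: powr_diff)
            finally show ?thesis by (simp add: p_def)
          qed
          have "2 * \<bar>F t \<omega> - \<rho> * A t \<omega>\<bar> / t powr p \<le> 2 * (K \<omega> + (\<eta>/2) * A t \<omega> + C * ((t powr \<gamma> + 1) * t)) / t powr p"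
            using pb tp by (intro divide_right_mono) auto
          also have "\<dots> = \<eta> * (A t \<omega> / t powr p) + (2 * K \<omega> * (1 / t powr p) + 2 * C * ((t powr \<gamma> + 1) * t / t powr p))"
            using tp by (simp add: field_simps)
          also have "\<dots> = \<eta> * (A t \<omega> / t powr p) + E t \<omega>"
            using eq2 t1 by (simp add: E_def powr_minus_divide)
          finally show "\<bar>2 * F t \<omega> / t powr p - 2 * \<rho> * (A t \<omega> / t powr p)\<bar> \<le> \<eta> * (A t \<omega> / t powr p) + E t \<omega>"
            using eq1 by simp
        qed
      qed
    qed
  qed
  then show ?thesis by (simp add: F_def p_def)
qed


end
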